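(* The extremal edges of the reduced Schubert system $\overline\Sigma$ satisfy: (1) every vertex $(v,t,s)$ of $\overline\Sigma$ is an end vertex of at most two extremal edges; (2) if $\beta\subset\mathcal B$ is such that the $\beta$-state $\Sigma_\beta$ is not contradictory, $\{(v,t,s),(i,j)\}$ is an extremal edge of $\overline\Sigma$, and $(v,t,s)$ is a vertex of $\Sigma_\beta$ (i.e. $\beta$-relevant), then $i\notin\beta$ and $j\in\beta$.
   Context: Let $Q$ be a quiver with finite $Q_0,Q_1$, $M$ a finite-dimensional complex representation with ordered basis $\mathcal B=\bigcup_p\mathcal B_p$ (bases of $M_p$, total order on $\mathcal B$); $M_v(i)=\sum_j\mu_{v,i,j}j$ for $v:p\to q$, $i\in\mathcal B_p$; coefficient quiver $\Gamma$ with vertices $\mathcal B$, arrows $(v,i,j)$ from $i$ to $j$ with $\mu_{v,i,j}\ne0$; natural $F:\Gamma\to Q$. An arrow $(v,s,t)$ of $\Gamma$ is extremal if for all arrows $(v,s',t')\ne(v,s,t)$ of $\Gamma$, $s<s'$ or $t'<t$. $\mathrm{Rel}^2=\{(i,j):F(i)=F(j),i\le j\}$; $\mathrm{Rel}^3$ = triples $(v,t,s)$ ($v:p\to q$, $s\in F^{-1}(p)$, $t\in F^{-1}(q)$) with some $(v,s',t')\in\Gamma_1$, $s\ge s'$, $t\le t'$. Complete Schubert system $\Sigma$: with $E(v,t,s)=\sum_{(v,s',t')\in\Gamma_1}\mu_{v,s',t'}w_{t,t'}w_{s',s}-\sum_{(v,s',t)\in\Gamma_1}\mu_{v,s',t}w_{s',s}$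 regarded as a polynomial in $w_{i,j}$, $(i,j)\in\mathrm{Rel}^2$ (others set to $0$), $\Sigma$ is the graph on $\mathrm{Rel}^2\sqcup\mathrm{Rel}^3$ with edge $\{(i,j),(v,t,s)\}$ iff $w_{i,j}$ occurs in $E(v,t,s)$ and links $\lambda=((v,t,s),S)$ whenever $\prod_Sw_{i,j}$ occurs with nonzero coefficient $\mu_\lambda$. Partial evaluations: partial $\mathrm{ev}:\mathrm{Rel}^2\dashrightarrow\mathbb C$ such that for each triple and each neighbour $(k,l)$, if all other neighbours are in the domain then so is $(k,l)$ and $\sum_\lambda\mu_\lambda\prod_S\mathrm{ev}=0$. $f_\beta(i,j)=1$ if $i=j\in\beta$, $0$ if $i\in\beta,i\ne j$, $0$ if $j\notin\beta$, undefined otherwise; $\Sigma_\beta$ is contradictory if no partial evaluation extends $f_\beta$, otherwise $\mathrm{ev}_\beta$ is the unique minimal one and $\Sigma_\beta$ is defined as follows: for $\lambda=((v,t,s),S)$ let $\mu_{\beta,\lambda}=\sum\mu_{\lambda'}\prod_{S'\cap\mathrm{dom}\,\mathrm{ev}_\beta}\mathrm{ev}_\beta$ over links $\lambda'=((v,t,s),S')$ of $\Sigma$ with $S'\setminus\mathrm{dom}\,\mathrm{ev}_\beta=S$; the vertices of $\Sigma_\beta$ are the pairs outside $\mathrm{dom}\,\mathrm{ev}_\beta$ and the triples $\tau$ for which some $\mu_{\beta,(\tau,S)}\ne0$. Reduced Schubert system $\overline\Sigma$: for $(v,t,s)\in\mathrm{Rel}^3$ let $\overline E(v,t,s)=\sum_{(v,s,t')\in\Gamma_1,t<t'}\mu_{v,s,t'}w_{t,t'}+\sum_{(v,s',t')\in\Gamma_1,t<t',s'<s}\mu_{v,s',t'}w_{t,t'}w_{s',s}-\sum_{(v,s',t)\in\Gamma_1,s'<s}\mu_{v,s',t}w_{s',s}-\mu_{v,s,t}$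 ($\mu_{v,s,t}=0$ if no such arrow). $\overline\Sigma$ has vertices $\{(i,j)\in\mathrm{Rel}^2:i<j\}\sqcup\{(v,t,s)\in\mathrm{Rel}^3:(v,s,t)\text{ not an extremal arrow}\}$, edges $\{(v,t,s),(i,j)\}$ iff $w_{i,j}$ occurs in $\overline E(v,t,s)$, and links $((v,t,s),S)$ for each monomial $\prod_Sw_{i,j}$ occurring in $\overline E(v,t,s)$ with nonzero coefficient. An edge $\{(v,t,s),(i,j)\}$ of $\overline\Sigma$ is simply linked if $((v,t,s),\{(i,j)\})$ is a link and the edge is a leg of no other link; it is extremal if it is simply linked and either $j=s$ and $(v,i,t)$ is an extremal arrow of $\Gamma$, or $i=t$ and $(v,s,j)$ is an extremal arrow of $\Gamma$. *)

theory Defs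
  imports Complex_Main "HOL-Library.Multiset"
begin

text \<open>A quiver Q = (Q0, Q1, src, tgt) together with a finite-dimensional complex
representation M given through an ordered basis: basis is the (finite) union of
the bases B_p of the spaces M_p, vtx i = p means i is in B_p, and
coef v i j = mu_{v,i,j} are the matrix coefficients M_v(i) = sum_j mu_{v,i,j} j.
The total order on the basis is the order of the type 'b.\<close>

record ('q, 'a, 'b) repdata =
  Q0 :: "'q set"
  Q1 :: "'a set"
  src :: "'a \<Rightarrow> 'q"
  tgt :: "'a \<Rightarrow> 'q"
  basis :: "'b set"
  vtx :: "'b \<Rightarrow> 'q"
  coef :: "'a \<Rightarrow> 'b \<Rightarrow> 'b \<Rightarrow> complex"

definition wf_rep :: "('q, 'a, 'b) repdata \<Rightarrow> bool" where
  "wf_rep M \<longleftrightarrow> finite (Q0 M) \<and> finite (Q1 M) \<and> src M ` Q1 M \<subseteq> Q0 M \<and>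
     tgt M ` Q1 M \<subseteq> Q0 M \<and> finite (basis M) \<and> vtx M ` basis M \<subseteq> Q0 M"

definition garrow :: "('q, 'a, 'b) repdata \<Rightarrow> 'a \<Rightarrow> 'b \<Rightarrow> 'b \<Rightarrow> bool" where
  "garrow M v i j \<longleftrightarrow> v \<in> Q1 M \<and> i \<in> basis M \<and> j \<in> basis M \<and>
     vtx M i = src M v \<and> vtx M j = tgt M v \<and> coef M v i j \<noteq> 0"

definition extremal_arrow :: "('q, 'a, 'b::linorder) repdata \<Rightarrow> 'a \<Rightarrow> 'b \<Rightarrow> 'b \<Rightarrow> bool" where
  "extremal_arrow M v s t \<longleftrightarrow> garrow M v s t \<and>
     (\<forall>s' t'. garrow M v s' t' \<and> (s', t') \<noteq> (s, t) \<longrightarrow> s < s' \<or> t' < t)"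

definition Rel2 :: "('q, 'a, 'b::linorder) repdata \<Rightarrow> ('b \<times> 'b) set" where
  "Rel2 M = {(i, j). i \<in> basis M \<and> j \<in> basis M \<and> vtx M i = vtx M j \<and> i \<le> j}"

definition Rel3 :: "('q, 'a, 'b::linorder) repdata \<Rightarrow> ('a \<times> 'b \<times> 'b) set" where
  "Rel3 M = {(v, t, s). v \<in> Q1 M \<and> s \<in> basis M \<and> vtx M s = src M v \<and>
      t \<in> basis M \<and> vtx M t = tgt M v \<and> (\<exists>s' t'. garrow M v s' t' \<and> s' \<le> s \<and> t \<le> t')}"

text \<open>Polynomials in the variables w_{i,j} are represented by their coefficient
functions on monomials, a monomial being a finite multiset of variables.
coeffE M tau m is the coefficient of the monomial m in E(tau), after setting the
variables outside Rel2 to 0.\<close>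
definition coeffE :: "('q, 'a, 'b::linorder) repdata \<Rightarrow> 'a \<times> 'b \<times> 'b \<Rightarrow> ('b \<times> 'b) multiset \<Rightarrow> complex" where
  "coeffE M \<tau> m = (case \<tau> of (v, t, s) \<Rightarrow>
     (\<Sum>(s', t') \<in> {(s', t'). garrow M v s' t' \<and> (t, t') \<in> Rel2 M \<and> (s', s) \<in> Rel2 M \<and>
                          m = {#(t, t'), (s', s)#}}. coef M v s' t')
   - (\<Sum>s' \<in> {s'. garrow M v s' t \<and> (s', s) \<in> Rel2 M \<and> m = {#(s', s)#}}. coef M v s' t))"

definition monsE :: "('q, 'a, 'b::linorder) repdata \<Rightarrow> 'a \<times> 'b \<times> 'b \<Rightarrow> ('b \<times> 'b) multiset set" where
  "monsE M \<tau> = {m. coeffE M \<tau> m \<noteq> 0}"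

text \<open>Edges of the complete Schubert system Sigma; its links are the pairs (tau, S) with S in monsE M tau.\<close>
definition sig_edge :: "('q, 'a, 'b::linorder) repdata \<Rightarrow> 'a \<times> 'b \<times> 'b \<Rightarrow> 'b \<times> 'b \<Rightarrow> bool" where
  "sig_edge M \<tau> p \<longleftrightarrow> \<tau> \<in> Rel3 M \<and> p \<in> Rel2 M \<and> (\<exists>m \<in> monsE M \<tau>. p \<in># m)"

definition eval_mon :: "('b \<times> 'b \<rightharpoonup> complex) \<Rightarrow> ('b \<times> 'b) multiset \<Rightarrow> complex" where
  "eval_mon ev m = prod_mset (image_mset (\<lambda>x. the (ev x)) m)"

definition evalE :: "('q, 'a, 'b::linorder) repdata \<Rightarrow> 'a \<times> 'b \<times> 'b \<Rightarrow> ('b \<times> 'b \<rightharpoonup> complex) \<Rightarrow> complex" where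
  "evalE M \<tau> ev = (\<Sum>m \<in> monsE M \<tau>. coeffE M \<tau> m * eval_mon ev m)"

definition is_pe :: "('q, 'a, 'b::linorder) repdata \<Rightarrow> ('b \<times> 'b \<rightharpoonup> complex) \<Rightarrow> bool" where
  "is_pe M ev \<longleftrightarrow> dom ev \<subseteq> Rel2 M \<and>
     (\<forall>\<tau> \<in> Rel3 M. \<forall>p. sig_edge M \<tau> p \<longrightarrow>
        (\<forall>p'. sig_edge M \<tau> p' \<and> p' \<noteq> p \<longrightarrow> p' \<in> dom ev) \<longrightarrow>
        p \<in> dom ev \<and> evalE M \<tau> ev = 0)"

definition fbeta :: "('q, 'a, 'b::linorder) repdata \<Rightarrow> 'b set \<Rightarrow> 'b \<times> 'b \<rightharpoonup> complex" where
  "fbeta M \<beta> p = (case p of (i, j) \<Rightarrow>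
     if (i, j) \<notin> Rel2 M then None
     else if i = j \<and> i \<in> \<beta> then Some 1
     else if i \<in> \<beta> then Some 0
     else if j \<notin> \<beta> then Some 0
     else None)"

definition contradictory :: "('q, 'a, 'b::linorder) repdata \<Rightarrow> 'b set \<Rightarrow> bool" where
  "contradictory M \<beta> \<longleftrightarrow> \<not> (\<exists>ev. is_pe M ev \<and> fbeta M \<beta> \<subseteq>\<^sub>m ev)"

definition min_pe :: "('q, 'a, 'b::linorder) repdata \<Rightarrow> 'b set \<Rightarrow> ('b \<times> 'b \<rightharpoonup> complex) \<Rightarrow> bool" where
  "min_pe M \<beta> ev \<longleftrightarrow> is_pe M ev \<and> fbeta M \<beta> \<subseteq>\<^sub>m ev \<and>
     (\<forall>ev'. is_pe M ev' \<and> fbeta M \<beta> \<subseteq>\<^sub>m ev' \<longrightarrow> ev \<subseteq>\<^sub>m ev')"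

definition mu_beta :: "('q, 'a, 'b::linorder) repdata \<Rightarrow> ('b \<times> 'b \<rightharpoonup> complex) \<Rightarrow> 'a \<times> 'b \<times> 'b \<Rightarrow> ('b \<times> 'b) multiset \<Rightarrow> complex" where
  "mu_beta M ev \<tau> S = (\<Sum>S' \<in> {S' \<in> monsE M \<tau>. filter_mset (\<lambda>x. x \<notin> dom ev) S' = S}.
      coeffE M \<tau> S' * eval_mon ev (filter_mset (\<lambda>x. x \<in> dom ev) S'))"

definition beta_relevant :: "('q, 'a, 'b::linorder) repdata \<Rightarrow> 'b set \<Rightarrow> 'a \<times> 'b \<times> 'b \<Rightarrow> bool" where
  "beta_relevant M \<beta> \<tau> \<longleftrightarrow> \<tau> \<in> Rel3 M \<and>
     (\<exists>ev. min_pe M \<beta> ev \<and> (\<exists>S. mu_beta M ev \<tau> S \<noteq> 0))"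

definition coeffR :: "('q, 'a, 'b::linorder) repdata \<Rightarrow> 'a \<times> 'b \<times> 'b \<Rightarrow> ('b \<times> 'b) multiset \<Rightarrow> complex" where
  "coeffR M \<tau> m = (case \<tau> of (v, t, s) \<Rightarrow>
     (\<Sum>t' \<in> {t'. garrow M v s t' \<and> t < t' \<and> m = {#(t, t')#}}. coef M v s t')
   + (\<Sum>(s', t') \<in> {(s', t'). garrow M v s' t' \<and> t < t' \<and> s' < s \<and> m = {#(t, t'), (s', s)#}}. coef M v s' t')
   - (\<Sum>s' \<in> {s'. garrow M v s' t \<and> s' < s \<and> m = {#(s', s)#}}. coef M v s' t)
   - (if m = {#} \<and> garrow M v s t then coef M v s t else 0))"

definition monsR :: "('q, 'a, 'b::linorder) repdata \<Rightarrow> 'a \<times> 'b \<times> 'b \<Rightarrow> ('b \<times> 'b) multiset set" where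
  "monsR M \<tau> = {m. coeffR M \<tau> m \<noteq> 0}"

definition sbar_tvert :: "('q, 'a, 'b::linorder) repdata \<Rightarrow> 'a \<times> 'b \<times> 'b \<Rightarrow> bool" where
  "sbar_tvert M \<tau> \<longleftrightarrow> \<tau> \<in> Rel3 M \<and> (case \<tau> of (v, t, s) \<Rightarrow> \<not> extremal_arrow M v s t)"

definition sbar_pvert :: "('q, 'a, 'b::linorder) repdata \<Rightarrow> 'b \<times> 'b \<Rightarrow> bool" where
  "sbar_pvert M p \<longleftrightarrow> p \<in> Rel2 M \<and> fst p < snd p"

definition sbar_edge :: "('q, 'a, 'b::linorder) repdata \<Rightarrow> 'a \<times> 'b \<times> 'b \<Rightarrow> 'b \<times> 'b \<Rightarrow> bool" where
  "sbar_edge M \<tau> p \<longleftrightarrow> sbar_tvert M \<tau> \<and> sbar_pvert M p \<and> (\<exists>m \<in> monsR M \<tau>. p \<in># m)"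

definition simply_linked :: "('q, 'a, 'b::linorder) repdata \<Rightarrow> 'a \<times> 'b \<times> 'b \<Rightarrow> 'b \<times> 'b \<Rightarrow> bool" where
  "simply_linked M \<tau> p \<longleftrightarrow> sbar_edge M \<tau> p \<and> {#p#} \<in> monsR M \<tau> \<and>
     (\<forall>m \<in> monsR M \<tau>. p \<in># m \<longrightarrow> m = {#p#})"

definition extremal_edge :: "('q, 'a, 'b::linorder) repdata \<Rightarrow> 'a \<times> 'b \<times> 'b \<Rightarrow> 'b \<times> 'b \<Rightarrow> bool" where
  "extremal_edge M \<tau> p \<longleftrightarrow> (case \<tau> of (v, t, s) \<Rightarrow> case p of (i, j) \<Rightarrow>
     simply_linked M \<tau> p \<and>
     ((j = s \<and> extremal_arrow M v i t) \<or> (i = t \<and> extremal_arrow M v s j)))"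

end

theory Submission
  imports Defs
begin
lemma sum_expand:
  fixes a :: "'k \<Rightarrow> complex" and b :: "'j \<Rightarrow> complex" and F :: "'m \<Rightarrow> complex"
  assumes fin: "finite T1" "finite T2"
  and F: "\<And>m. F m = (\<Sum>k\<in>{k\<in>T1. f k = m}. a k) - (\<Sum>k\<in>{k\<in>T2. g k = m}. b k)"
  shows "(\<Sum>m\<in>{m. F m \<noteq> 0 \<and> P m}. F m * h m)
       = (\<Sum>k\<in>{k\<in>T1. P (f k)}. a k * h (f k)) - (\<Sum>k\<in>{k\<in>T2. P (g k)}. b k * h (g k))"
proof -
  let ?U = "{m \<in> f`T1 \<union> g`T2. P m}"
  have fU: "finite ?U" using fin by auto
  have sub: "{m. F m \<noteq> 0 \<and> P m} \<subseteq> ?U"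
  proof
    fix m assume "m \<in> {m. F m \<noteq> 0 \<and> P m}"
    hence "F m \<noteq> 0" "P m" by auto
    have "\<not> ({k\<in>T1. f k = m} = {} \<and> {k\<in>T2. g k = m} = {})"
    proof
      assume h: "{k\<in>T1. f k = m} = {} \<and> {k\<in>T2. g k = m} = {}"
      have "F m = 0" unfolding F by (simp only: h sum.empty) simp
      thus False using \<open>F m \<noteq> 0\<close> by simp
    qed
    then have "{k\<in>T1. f k = m} \<noteq> {} \<or> {k\<in>T2. g k = m} \<noteq> {}" by blast
    thus "m \<in> ?U" using \<open>P m\<close> by auto
  qed
  have "(\<Sum>m\<in>{m. F m \<noteq> 0 \<and> P m}. F m * h m) = (\<Sum>m\<in>?U. F m * h m)"
    by (rule sum.mono_neutral_left[OF fU sub]) auto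
  also have "\<dots> = (\<Sum>m\<in>?U. (\<Sum>k\<in>{k\<in>T1. f k = m}. a k * h (f k)))
                 - (\<Sum>m\<in>?U. (\<Sum>k\<in>{k\<in>T2. g k = m}. b k * h (g k)))"
    unfolding sum_subtractf[symmetric]
  proof (rule sum.cong[OF refl])
    fix m
    have 1: "(\<Sum>k\<in>{k\<in>T1. f k = m}. a k * h (f k)) = (\<Sum>k\<in>{k\<in>T1. f k = m}. a k) * h m"
      by (simp add: sum_distrib_right)
    have 2: "(\<Sum>k\<in>{k\<in>T2. g k = m}. b k * h (g k)) = (\<Sum>k\<in>{k\<in>T2. g k = m}. b k) * h m"
      by (simp add: sum_distrib_right)
    show "F m * h m = (\<Sum>k\<in>{k\<in>T1. f k = m}. a k * h (f k)) - (\<Sum>k\<in>{k\<in>T2. g k = m}. b k * h (g k))"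
      unfolding 1 2 F by (simp add: left_diff_distrib)
  qed
  also have "(\<Sum>m\<in>?U. (\<Sum>k\<in>{k\<in>T1. f k = m}. a k * h (f k))) = (\<Sum>k\<in>{k\<in>T1. P (f k)}. a k * h (f k))"
  proof -
    have "(\<Sum>m\<in>?U. (\<Sum>k\<in>{k\<in>T1. f k = m}. a k * h (f k)))
        = (\<Sum>m\<in>?U. (\<Sum>k\<in>{k. k \<in> {k\<in>T1. P (f k)} \<and> f k = m}. a k * h (f k)))"
      by (rule sum.cong) (auto intro!: sum.cong)
    also have "\<dots> = (\<Sum>k\<in>{k\<in>T1. P (f k)}. a k * h (f k))"
      by (rule sum.group) (use fin in auto)
    finally show ?thesis .
  qed
  also have "(\<Sum>m\<in>?U. (\<Sum>k\<in>{k\<in>T2. g k = m}. b k * h (g k))) = (\<Sum>k\<in>{k\<in>T2. P (g k)}. b k * h (g k))"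
  proof -
    have "(\<Sum>m\<in>?U. (\<Sum>k\<in>{k\<in>T2. g k = m}. b k * h (g k)))
        = (\<Sum>m\<in>?U. (\<Sum>k\<in>{k. k \<in> {k\<in>T2. P (g k)} \<and> g k = m}. b k * h (g k)))"
      by (rule sum.cong) (auto intro!: sum.cong)
    also have "\<dots> = (\<Sum>k\<in>{k\<in>T2. P (g k)}. b k * h (g k))"
      by (rule sum.group) (use fin in auto)
    finally show ?thesis .
  qed
  finally show ?thesis .
qed


definition T1 :: "('q, 'a, 'b::linorder) repdata \<Rightarrow> 'a \<Rightarrow> 'b \<Rightarrow> 'b \<Rightarrow> ('b \<times> 'b) set" where
  "T1 M v t s = {(s', t'). garrow M v s' t' \<and> (t, t') \<in> Rel2 M \<and> (s', s) \<in> Rel2 M}"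

definition T2 :: "('q, 'a, 'b::linorder) repdata \<Rightarrow> 'a \<Rightarrow> 'b \<Rightarrow> 'b \<Rightarrow> 'b set" where
  "T2 M v t s = {s'. garrow M v s' t \<and> (s', s) \<in> Rel2 M}"

definition mon1 :: "'b \<Rightarrow> 'b \<Rightarrow> 'b \<times> 'b \<Rightarrow> ('b \<times> 'b) multiset" where
  "mon1 t s k = (case k of (s', t') \<Rightarrow> {#(t, t'), (s', s)#})"

lemma coeffE_alt:
  "coeffE M (v, t, s) m =
     (\<Sum>k\<in>{k\<in>T1 M v t s. mon1 t s k = m}. (case k of (s', t') \<Rightarrow> coef M v s' t'))
   - (\<Sum>k\<in>{k\<in>T2 M v t s. {#(k, s)#} = m}. coef M v k t)"
proof -
  have e1: "{(s', t'). garrow M v s' t' \<and> (t, t') \<in> Rel2 M \<and> (s', s) \<in> Rel2 M \<and>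
                          m = {#(t, t'), (s', s)#}} = {k\<in>T1 M v t s. mon1 t s k = m}"
    unfolding T1_def mon1_def by auto
  have e2: "{s'. garrow M v s' t \<and> (s', s) \<in> Rel2 M \<and> m = {#(s', s)#}} = {k\<in>T2 M v t s. {#(k, s)#} = m}"
    unfolding T2_def by auto
  show ?thesis by (simp only: coeffE_def prod.case e1 e2)
qed

lemma fin_T:
  assumes "wf_rep M"
  shows "finite (T1 M v t s)" "finite (T2 M v t s)"
proof -
  have fb: "finite (basis M)" using assms unfolding wf_rep_def by auto
  have "T1 M v t s \<subseteq> basis M \<times> basis M" unfolding T1_def garrow_def by auto
  thus "finite (T1 M v t s)" using fb finite_subset by blast
  have "T2 M v t s \<subseteq> basis M" unfolding T2_def garrow_def by auto
  thus "finite (T2 M v t s)" using fb finite_subset by blast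
qed

lemma coeffE_expand:
  assumes "wf_rep M"
  shows "(\<Sum>m\<in>{m. coeffE M (v, t, s) m \<noteq> 0 \<and> P m}. coeffE M (v, t, s) m * h m)
       = (\<Sum>k\<in>{k\<in>T1 M v t s. P (mon1 t s k)}. (case k of (s', t') \<Rightarrow> coef M v s' t') * h (mon1 t s k))
       - (\<Sum>k\<in>{k\<in>T2 M v t s. P {#(k, s)#}}. coef M v k t * h {#(k, s)#})"
  by (rule sum_expand[OF fin_T[OF assms]]) (rule coeffE_alt)

lemma mon1_add: "mon1 t s (s', t') = add_mset (t, t') {#(s', s)#}"
  unfolding mon1_def by simp

lemma h_add:
  "eval_mon ev (filter_mset (\<lambda>x. x \<in> dom ev) (add_mset p m)) =
    (if p \<in> dom ev then the (ev p) * eval_mon ev (filter_mset (\<lambda>x. x \<in> dom ev) m)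
     else eval_mon ev (filter_mset (\<lambda>x. x \<in> dom ev) m))"
  unfolding eval_mon_def by simp

lemma P_add:
  "filter_mset (\<lambda>x. x \<notin> dom ev) (add_mset p m) =
    (if p \<in> dom ev then filter_mset (\<lambda>x. x \<notin> dom ev) m else add_mset p (filter_mset (\<lambda>x. x \<notin> dom ev) m))"
  by simp

lemma fb_ev:
  assumes "fbeta M \<beta> \<subseteq>\<^sub>m ev" "fbeta M \<beta> p = Some c"
  shows "ev p = Some c"
  using assms unfolding map_le_def by (metis domI)

lemma mu_beta_expand:
  assumes "wf_rep M"
  shows "mu_beta M ev (v, t, s) S =
     (\<Sum>k\<in>{k\<in>T1 M v t s. filter_mset (\<lambda>x. x \<notin> dom ev) (mon1 t s k) = S}.
          (case k of (s', t') \<Rightarrow> coef M v s' t') * eval_mon ev (filter_mset (\<lambda>x. x \<in> dom ev) (mon1 t s k)))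
   - (\<Sum>k\<in>{k\<in>T2 M v t s. filter_mset (\<lambda>x. x \<notin> dom ev) {#(k, s)#} = S}.
          coef M v k t * eval_mon ev (filter_mset (\<lambda>x. x \<in> dom ev) {#(k, s)#}))"
proof -
  have "{S' \<in> monsE M (v, t, s). filter_mset (\<lambda>x. x \<notin> dom ev) S' = S}
      = {m. coeffE M (v, t, s) m \<noteq> 0 \<and> filter_mset (\<lambda>x. x \<notin> dom ev) m = S}"
    unfolding monsE_def by auto
  thus ?thesis unfolding mu_beta_def
    using coeffE_expand[OF assms, where v=v and t=t and s=s and P="\<lambda>m. filter_mset (\<lambda>x. x \<notin> dom ev) m = S"
        and h="\<lambda>m. eval_mon ev (filter_mset (\<lambda>x. x \<in> dom ev) m)"] by simp
qed


lemma irrel_s: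
  assumes "wf_rep M" "fbeta M \<beta> \<subseteq>\<^sub>m ev" "s \<notin> \<beta>"
  shows "mu_beta M ev (v, t, s) S = 0"
proof -
  have z: "ev (s', s) = Some 0" if "(s', s) \<in> Rel2 M" for s'
  proof -
    have "fbeta M \<beta> (s', s) = Some 0" using that assms(3) unfolding fbeta_def by auto
    thus ?thesis using fb_ev[OF assms(2)] by blast
  qed
  have h0: "eval_mon ev (filter_mset (\<lambda>x. x \<in> dom ev) {#(s', s)#}) = 0" if "(s', s) \<in> Rel2 M" for s'
    using z[OF that] by (simp add: eval_mon_def domI)
  have A: "eval_mon ev (filter_mset (\<lambda>x. x \<in> dom ev) (mon1 t s k)) = 0" if "k \<in> T1 M v t s" for k
  proof -
    obtain s' t' where k: "k = (s', t')" by (cases k)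
    have "(s', s) \<in> Rel2 M" using that k unfolding T1_def by auto
    note h0' = h0[OF this]
    show ?thesis unfolding k mon1_add by (subst h_add) (simp only: h0' mult_zero_right if_cancel)
  qed
  have B: "eval_mon ev (filter_mset (\<lambda>x. x \<in> dom ev) {#(k, s)#}) = 0" if "k \<in> T2 M v t s" for k
    using that h0 unfolding T2_def by auto
  have 1: "(\<Sum>k\<in>{k\<in>T1 M v t s. Pf k}. c k * eval_mon ev (filter_mset (\<lambda>x. x \<in> dom ev) (mon1 t s k))) = 0"
    for Pf c
  proof (rule sum.neutral, rule ballI)
    fix k assume "k \<in> {k\<in>T1 M v t s. Pf k}"
    hence "k \<in> T1 M v t s" by simp
    thus "c k * eval_mon ev (filter_mset (\<lambda>x. x \<in> dom ev) (mon1 t s k)) = 0" by (simp only: A mult_zero_right)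
  qed
  have 2: "(\<Sum>k\<in>{k\<in>T2 M v t s. Pf k}. c k * eval_mon ev (filter_mset (\<lambda>x. x \<in> dom ev) {#(k, s)#})) = 0"
    for Pf c
  proof (rule sum.neutral, rule ballI)
    fix k assume "k \<in> {k\<in>T2 M v t s. Pf k}"
    hence "k \<in> T2 M v t s" by simp
    thus "c k * eval_mon ev (filter_mset (\<lambda>x. x \<in> dom ev) {#(k, s)#}) = 0" by (simp only: B mult_zero_right)
  qed
  show ?thesis unfolding mu_beta_expand[OF assms(1)] 1 2 by simp
qed

lemma irrel_t:
  assumes "wf_rep M" "fbeta M \<beta> \<subseteq>\<^sub>m ev" "t \<in> \<beta>"
  shows "mu_beta M ev (v, t, s) S = 0"
proof -
  let ?P = "\<lambda>m. filter_mset (\<lambda>x. x \<notin> dom ev) m = S"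
  let ?h = "\<lambda>m. eval_mon ev (filter_mset (\<lambda>x. x \<in> dom ev) m)"
  let ?F = "\<lambda>k. (case k of (s', t') \<Rightarrow> coef M v s' t') * ?h (mon1 t s k)"
  have ev1: "ev (t, t') = Some (if t' = t then 1 else 0)" if "(t, t') \<in> Rel2 M" for t'
  proof -
    have "fbeta M \<beta> (t, t') = Some (if t' = t then 1 else 0)" using that assms(3) unfolding fbeta_def by auto
    thus ?thesis using fb_ev[OF assms(2)] by blast
  qed
  have key: "?P (mon1 t s (s', t')) = ?P {#(s', s)#} \<and>
             ?h (mon1 t s (s', t')) = (if t' = t then 1 else 0) * ?h {#(s', s)#}"
    if "(s', t') \<in> T1 M v t s" for s' t'
  proof -
    have "(t, t') \<in> Rel2 M" using that unfolding T1_def by auto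
    from ev1[OF this] show ?thesis unfolding mon1_add h_add P_add by (auto simp: domI)
  qed
  define A where "A = {k\<in>T1 M v t s. ?P (mon1 t s k)}"
  define B where "B = (\<lambda>s'. (s', t)) ` {k\<in>T2 M v t s. ?P {#(k, s)#}}"
  have T2T1: "(s', t) \<in> T1 M v t s" if "s' \<in> T2 M v t s" for s'
    using that unfolding T1_def T2_def Rel2_def garrow_def by auto
  have BA: "B \<subseteq> A"
  proof
    fix k assume "k \<in> B"
    then obtain s' where k: "k = (s', t)" "s' \<in> T2 M v t s" "?P {#(s', s)#}" unfolding B_def by auto
    show "k \<in> A" unfolding A_def using k T2T1[OF k(2)] key[OF T2T1[OF k(2)]] by auto
  qed
  have finA: "finite A" unfolding A_def using fin_T[OF assms(1)] by auto
  have z: "\<forall>k\<in>A - B. ?F k = 0"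
  proof
    fix k assume kAB: "k \<in> A - B"
    obtain s' t' where k: "k = (s', t')" by (cases k)
    have kT: "(s', t') \<in> T1 M v t s" and Pk: "?P (mon1 t s (s', t'))" using kAB k unfolding A_def by auto
    have "t' \<noteq> t"
    proof
      assume tt: "t' = t"
      have "s' \<in> T2 M v t s" using kT tt unfolding T1_def T2_def by auto
      moreover have "?P {#(s', s)#}" using key[OF kT] Pk by simp
      ultimately have "k \<in> B" unfolding B_def k tt by auto
      thus False using kAB by auto
    qed
    thus "?F k = 0" using key[OF kT] k by simp
  qed
  have "sum ?F A = sum ?F B" by (rule sum.mono_neutral_right[OF finA BA z])
  also have "\<dots> = (\<Sum>s'\<in>{k\<in>T2 M v t s. ?P {#(k, s)#}}. ?F (s', t))"
    unfolding B_def by (subst sum.reindex) (auto simp: inj_on_def)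
  also have "\<dots> = (\<Sum>s'\<in>{k\<in>T2 M v t s. ?P {#(k, s)#}}. coef M v s' t * ?h {#(s', s)#})"
    by (rule sum.cong) (auto simp: key[OF T2T1])
  finally show ?thesis unfolding mu_beta_expand[OF assms(1)] A_def by simp
qed

lemma ext_contra:
  assumes "wf_rep M" "extremal_arrow M v x y" "is_pe M ev" "fbeta M \<beta> \<subseteq>\<^sub>m ev" "x \<in> \<beta>" "y \<notin> \<beta>"
  shows False
proof -
  have ga: "garrow M v x y" using assms(2) unfolding extremal_arrow_def by auto
  have bas: "x \<in> basis M" "y \<in> basis M" "v \<in> Q1 M" "vtx M x = src M v" "vtx M y = tgt M v"
    "coef M v x y \<noteq> 0" using ga unfolding garrow_def by auto
  have T1e: "T1 M v y x = {(x, y)}"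
  proof (intro equalityI subsetI)
    fix k assume "k \<in> T1 M v y x"
    then obtain s' t' where k: "k = (s', t')" "garrow M v s' t'" "y \<le> t'" "s' \<le> x"
      unfolding T1_def Rel2_def by auto
    show "k \<in> {(x, y)}"
    proof (rule ccontr)
      assume "k \<notin> {(x, y)}"
      hence "(s', t') \<noteq> (x, y)" using k by auto
      hence "x < s' \<or> t' < y" using assms(2) k(2) unfolding extremal_arrow_def by blast
      thus False using k by auto
    qed
  next
    fix k assume "k \<in> {(x, y)}"
    thus "k \<in> T1 M v y x" using ga bas unfolding T1_def Rel2_def by auto
  qed
  have T2e: "T2 M v y x = {x}"
  proof (intro equalityI subsetI)
    fix k assume "k \<in> T2 M v y x"
    hence k: "garrow M v k y" "k \<le> x" unfolding T2_def Rel2_def by auto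
    show "k \<in> {x}"
    proof (rule ccontr)
      assume "k \<notin> {x}"
      hence "(k, y) \<noteq> (x, y)" by auto
      hence "x < k \<or> y < y" using assms(2) k(1) unfolding extremal_arrow_def by blast
      thus False using k by auto
    qed
  next
    fix k assume "k \<in> {x}"
    thus "k \<in> T2 M v y x" using ga bas unfolding T2_def Rel2_def by auto
  qed
  have exx: "ev (x, x) = Some 1"
  proof -
    have "fbeta M \<beta> (x, x) = Some 1" using assms(5) bas unfolding fbeta_def Rel2_def by auto
    thus ?thesis using fb_ev[OF assms(4)] by blast
  qed
  have eyy: "ev (y, y) = Some 0"
  proof -
    have "fbeta M \<beta> (y, y) = Some 0" using assms(6) bas unfolding fbeta_def Rel2_def by auto
    thus ?thesis using fb_ev[OF assms(4)] by blast
  qed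
  have m1: "mon1 y x (x, y) = {#(y, y), (x, x)#}" unfolding mon1_def by simp
  have co: "coeffE M (v, y, x) m = (if {#(y, y), (x, x)#} = m then coef M v x y else 0)
                                 - (if {#(x, x)#} = m then coef M v x y else 0)" for m
  proof -
    have s1: "{k\<in>{a}. P k} = (if P a then {a} else {})" for a :: "'x" and P by auto
    show ?thesis unfolding coeffE_alt T1e T2e s1 m1 by simp
  qed
  have mons: "monsE M (v, y, x) \<subseteq> {{#(y, y), (x, x)#}, {#(x, x)#}}"
    unfolding monsE_def co by auto
  have inmons: "{#(x, x)#} \<in> monsE M (v, y, x)"
    unfolding monsE_def co using bas by auto
  have rel3: "(v, y, x) \<in> Rel3 M" unfolding Rel3_def using ga bas by auto
  have xxR: "(x, x) \<in> Rel2 M" using bas unfolding Rel2_def by auto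
  have se: "sig_edge M (v, y, x) (x, x)" unfolding sig_edge_def
    using rel3 xxR bexI[OF _ inmons, of "\<lambda>m. (x, x) \<in># m"] by simp
  have others: "\<forall>p'. sig_edge M (v, y, x) p' \<and> p' \<noteq> (x, x) \<longrightarrow> p' \<in> dom ev"
  proof (intro allI impI)
    fix p' assume "sig_edge M (v, y, x) p' \<and> p' \<noteq> (x, x)"
    then obtain m where "m \<in> monsE M (v, y, x)" "p' \<in># m" unfolding sig_edge_def by auto
    hence "p' \<in> {(y, y), (x, x)}" using mons by auto
    thus "p' \<in> dom ev" using exx eyy by auto
  qed
  have ev0: "evalE M (v, y, x) ev = 0"
    using assms(3) rel3 se others unfolding is_pe_def by blast
  have "evalE M (v, y, x) ev = - coef M v x y"
  proof -
    have "monsE M (v, y, x) = {m. coeffE M (v, y, x) m \<noteq> 0 \<and> True}" unfolding monsE_def by simp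
    hence "evalE M (v, y, x) ev = (\<Sum>m\<in>{m. coeffE M (v, y, x) m \<noteq> 0 \<and> True}. coeffE M (v, y, x) m * eval_mon ev m)"
      unfolding evalE_def by simp
    also have "\<dots> = (\<Sum>k\<in>{k\<in>T1 M v y x. True}. (case k of (s', t') \<Rightarrow> coef M v s' t') * eval_mon ev (mon1 y x k))
       - (\<Sum>k\<in>{k\<in>T2 M v y x. True}. coef M v k y * eval_mon ev {#(k, x)#})"
      by (rule coeffE_expand[OF assms(1)])
    also have "\<dots> = - coef M v x y"
      unfolding T1e T2e using exx eyy by (simp add: eval_mon_def m1)
    finally show ?thesis .
  qed
  thus False using ev0 bas(6) by simp
qed

lemma ext_uniq1:
  assumes "extremal_arrow M v i t" "extremal_arrow M v i' t" shows "i = i'"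
proof (rule ccontr)
  assume ne: "i \<noteq> i'"
  have "i < i'" using assms ne unfolding extremal_arrow_def by auto
  moreover have "i' < i" using assms ne unfolding extremal_arrow_def by auto
  ultimately show False by simp
qed

lemma ext_uniq2:
  assumes "extremal_arrow M v s j" "extremal_arrow M v s j'" shows "j = j'"
proof (rule ccontr)
  assume ne: "j \<noteq> j'"
  have "j' < j" using assms ne unfolding extremal_arrow_def by auto
  moreover have "j < j'" using assms ne unfolding extremal_arrow_def by auto
  ultimately show False by simp
qed

theorem lemma2p25:
  fixes M :: "('q, 'a, 'b::linorder) repdata"
  assumes "wf_rep M"
  shows "(\<forall>\<tau>. sbar_tvert M \<tau> \<longrightarrow>
            finite {p. extremal_edge M \<tau> p} \<and> card {p. extremal_edge M \<tau> p} \<le> 2)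
       \<and> (\<forall>\<beta> v t s i j. \<beta> \<subseteq> basis M \<longrightarrow> \<not> contradictory M \<beta> \<longrightarrow>
            extremal_edge M (v, t, s) (i, j) \<longrightarrow> beta_relevant M \<beta> (v, t, s) \<longrightarrow>
            i \<notin> \<beta> \<and> j \<in> \<beta>)"
proof (rule conjI; intro allI impI)
  fix \<tau> assume tv: "sbar_tvert M \<tau>"
  obtain v t s where tau: "\<tau> = (v, t, s)" by (cases \<tau>)
  have sb: "s \<in> basis M" "t \<in> basis M" using tv tau unfolding sbar_tvert_def Rel3_def by auto
  define A where "A = {p. \<exists>i. p = (i, s) \<and> extremal_arrow M v i t}"
  define B where "B = {p. \<exists>j. p = (t, j) \<and> extremal_arrow M v s j}"
  have sub: "{p. extremal_edge M \<tau> p} \<subseteq> A \<union> B"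
    unfolding A_def B_def tau extremal_edge_def by auto
  have fb: "finite (basis M)" using assms unfolding wf_rep_def by auto
  have finA: "finite A"
  proof (rule finite_subset[OF _ finite_imageI[OF fb, of "\<lambda>i. (i, s)"]])
    show "A \<subseteq> (\<lambda>i. (i, s)) ` basis M"
      unfolding A_def extremal_arrow_def garrow_def by auto
  qed
  have finB: "finite B"
  proof (rule finite_subset[OF _ finite_imageI[OF fb, of "\<lambda>j. (t, j)"]])
    show "B \<subseteq> (\<lambda>j. (t, j)) ` basis M"
      unfolding B_def extremal_arrow_def garrow_def by auto
  qed
  have "\<forall>a\<in>A. \<forall>b\<in>A. a = b"
  proof (intro ballI)
    fix a b assume "a \<in> A" "b \<in> A"
    then obtain i1 i2 where "a = (i1, s)" "extremal_arrow M v i1 t" "b = (i2, s)" "extremal_arrow M v i2 t"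
      unfolding A_def by blast
    thus "a = b" using ext_uniq1 by metis
  qed
  hence cA: "card A \<le> 1" using card_le_Suc0_iff_eq[OF finA] by simp
  have "\<forall>a\<in>B. \<forall>b\<in>B. a = b"
  proof (intro ballI)
    fix a b assume "a \<in> B" "b \<in> B"
    then obtain i1 i2 where "a = (t, i1)" "extremal_arrow M v s i1" "b = (t, i2)" "extremal_arrow M v s i2"
      unfolding B_def by blast
    thus "a = b" using ext_uniq2 by metis
  qed
  hence cB: "card B \<le> 1" using card_le_Suc0_iff_eq[OF finB] by simp
  have fAB: "finite (A \<union> B)" using finA finB by simp
  have "card {p. extremal_edge M \<tau> p} \<le> card (A \<union> B)" by (rule card_mono[OF fAB sub])
  also have "\<dots> \<le> card A + card B" by (rule card_Un_le)
  finally show "finite {p. extremal_edge M \<tau> p} \<and> card {p. extremal_edge M \<tau> p} \<le> 2"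
    using finite_subset[OF sub fAB] cA cB by simp
next
  fix \<beta> v t s i j
  assume "\<beta> \<subseteq> basis M" "\<not> contradictory M \<beta>" and ee: "extremal_edge M (v, t, s) (i, j)"
    and rel: "beta_relevant M \<beta> (v, t, s)"
  obtain ev S where mp: "min_pe M \<beta> ev" and mu: "mu_beta M ev (v, t, s) S \<noteq> 0"
    using rel unfolding beta_relevant_def by auto
  have pe: "is_pe M ev" and le: "fbeta M \<beta> \<subseteq>\<^sub>m ev" using mp unfolding min_pe_def by auto
  have sB: "s \<in> \<beta>" using irrel_s[OF assms le] mu by blast
  have tB: "t \<notin> \<beta>" using irrel_t[OF assms le] mu by blast
  from ee have "(j = s \<and> extremal_arrow M v i t) \<or> (i = t \<and> extremal_arrow M v s j)"
    unfolding extremal_edge_def by simp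
  thus "i \<notin> \<beta> \<and> j \<in> \<beta>"
  proof
    assume h: "j = s \<and> extremal_arrow M v i t"
    have "i \<notin> \<beta>"
    proof
      assume "i \<in> \<beta>"
      thus False using ext_contra[OF assms _ pe le _ tB] h by blast
    qed
    thus ?thesis using h sB by simp
  next
    assume h: "i = t \<and> extremal_arrow M v s j"
    have "j \<in> \<beta>"
    proof (rule ccontr)
      assume "j \<notin> \<beta>"
      thus False using ext_contra[OF assms _ pe le sB] h by blast
    qed
    thus ?thesis using h tB by simp
  qed
qed

end
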